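(* Let $G^1$ be a 1-wconnected 1-graph and let $d$ be the wdistance. For all maximal nodes $x,y,z$ of $G^1$: (i) $d(x,y)$ is an ordinal with $d(x,y)<\omega^2$; (ii) $d(x,y)=0$ if and only if $x=y$; (iii) $d(x,y)=d(y,x)$; (iv) $d(x,z)\le d(x,y)\oplus d(y,z)$, where $\oplus$ is the natural (Hessenberg) sum of ordinals.
   Context: 1-graphs. Let $G^0=\{X^0,B\}$ be a graph whose nodes are called 0-nodes and whose branches are two-element sets of 0-nodes. A 0-tip is an equivalence class of one-ended paths in $G^0$, two being equivalent if they are eventually identical. The 0-tips are partitioned into subsets. To some subsets a single 0-node is adjoined, each 0-node being adjoined to at most one subset. The resulting sets are the 1-nodes, $X^1$ is their set, and $G^1=\{X^0,B,X^1\}$ is a 1-graph. A node of $G^1$ is a 0-node or a 1-node. A 0-node is maximal if it is contained in no 1-node; every 1-node is maximal. 0-walks. A 0-walk is a conventional walk in $G^0$, finite, one-way infinite or two-way infinite, terminating at 0-nodes on any terminating side. It is extended if on each infinite side it is eventually identical to a one-ended path. It reaches a 1-node $x^1$ through a 0-tip if on some infinite side it is eventually identical to a representative of a 0-tip contained in $x^1$. It reaches $x^1$ through a branch if it terminates at a 0-node contained in $x^1$. 1-walks. A nontrivial two-ended 1-walk is a sequence $\langle x_0,W_0^0,x_1^1,W_1^0,\dots,x_{m-1}^1,W_{m-1}^0,x_m\rangle$ with $m\ge 1$ satisfying: - $x_1^1,\dots,x_{m-1}^1$ are 1-nodes, and $x_0,x_m$ are 0-nodes or 1-nodes; - each $W_k^0$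 is a nontrivial 0-walk reaching the two nodes adjacent to it in the sequence; - for each $k=1,\dots,m-1$, at least one of $W_{k-1}^0,W_k^0$ reaches $x_k^1$ through a 0-tip. Lengths. A two-ended 0-walk has length equal to its number of branch traversals. An extended one-ended 0-walk has length $\omega$. An extended endless 0-walk has length $\omega\cdot 2$. A two-ended 1-walk has length equal to the natural sum of the lengths of its 0-walks $W_k^0$, which has the form $\omega\cdot\tau_1+\tau_0$ with $\tau_1\ge1$. Wdistance. The wdistance $d(x,y)$ between nodes $x\ne y$ is the minimum length over all two-ended 0-walks or 1-walks terminating at $x$ and $y$; $d(x,x)=0$. 1-wconnected. $G^1$ is 1-wconnected if every two nodes (equivalently, every two branches) are joined by a 0-walk or a 1-walk, so the wdistance is always defined. *)

theory Defs
  imports Main "HOL-Library.Product_Lexorder"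
begin

text \<open>An ordinal omega*a + b (a, b natural numbers) is represented by the pair (a, b).
  The lexicographic order on nat * nat (HOL-Library.Product_Lexorder) is exactly the
  ordinal order on omega^2, and it is a well-order.\<close>

type_synonym ord2 = "nat \<times> nat"

definition natsum :: "ord2 \<Rightarrow> ord2 \<Rightarrow> ord2" (infixl "\<oplus>\<^sub>o" 65) where
  "natsum p q = (fst p + fst q, snd p + snd q)"

definition evid :: "(nat \<Rightarrow> 'v) \<Rightarrow> (nat \<Rightarrow> 'v) \<Rightarrow> bool" where
  "evid p q \<longleftrightarrow> (\<exists>i j. \<forall>k. p (i + k) = q (j + k))"

definition onepath :: "'v set set \<Rightarrow> (nat \<Rightarrow> 'v) \<Rightarrow> bool" where
  "onepath B p \<longleftrightarrow> inj p \<and> (\<forall>n. {p n, p (Suc n)} \<in> B)"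

type_synonym 'v tip = "(nat \<Rightarrow> 'v) set"

definition tips0 :: "'v set set \<Rightarrow> 'v tip set" where
  "tips0 B = {{q. onepath B q \<and> evid p q} | p. onepath B p}"

text \<open>A 1-node: a nonempty set of 0-tips together with possibly one adjoined 0-node.\<close>

type_synonym 'v node1 = "'v tip set \<times> 'v option"

datatype 'v node = N0 'v | N1 "'v node1"

record 'v graph1 =
  X0 :: "'v set"
  Br :: "'v set set"
  X1 :: "'v node1 set"

definition is_1graph :: "'v graph1 \<Rightarrow> bool" where
  "is_1graph G \<longleftrightarrow>
     (\<forall>b\<in>Br G. \<exists>u v. u \<noteq> v \<and> b = {u, v} \<and> u \<in> X0 G \<and> v \<in> X0 G) \<and>
     (\<forall>n\<in>X1 G. fst n \<noteq> {} \<and> fst n \<subseteq> tips0 (Br G) \<and> (\<forall>v. snd n = Some v \<longrightarrow> v \<in> X0 G)) \<and>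
     \<Union>(fst ` X1 G) = tips0 (Br G) \<and>
     (\<forall>n\<in>X1 G. \<forall>n'\<in>X1 G. n \<noteq> n' \<longrightarrow> fst n \<inter> fst n' = {}) \<and>
     (\<forall>n\<in>X1 G. \<forall>n'\<in>X1 G. \<forall>v. snd n = Some v \<and> snd n' = Some v \<longrightarrow> n = n')"

definition nodes :: "'v graph1 \<Rightarrow> 'v node set" where
  "nodes G = N0 ` X0 G \<union> N1 ` X1 G"

definition maximal :: "'v graph1 \<Rightarrow> 'v node \<Rightarrow> bool" where
  "maximal G x \<longleftrightarrow> x \<in> nodes G \<and>
     (case x of N0 v \<Rightarrow> (\<forall>n\<in>X1 G. snd n \<noteq> Some v) | N1 _ \<Rightarrow> True)"

text \<open>Oriented 0-walks: finite (list of 0-nodes), one-way infinite to the right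
  (starting at f 0), one-way infinite to the left (ending at f 0, f 1, f 2, ... going
  leftwards), and two-way infinite (indexed by the integers).\<close>

datatype 'v walk0 =
    Fin "'v list"
  | InfR "nat \<Rightarrow> 'v"
  | InfL "nat \<Rightarrow> 'v"
  | Both "int \<Rightarrow> 'v"

fun is_walk0 :: "'v graph1 \<Rightarrow> 'v walk0 \<Rightarrow> bool" where
  "is_walk0 G (Fin vs) \<longleftrightarrow> vs \<noteq> [] \<and> set vs \<subseteq> X0 G \<and>
      (\<forall>i. Suc i < length vs \<longrightarrow> {vs ! i, vs ! Suc i} \<in> Br G)"
| "is_walk0 G (InfR f) \<longleftrightarrow> (\<forall>n. {f n, f (Suc n)} \<in> Br G)"
| "is_walk0 G (InfL f) \<longleftrightarrow> (\<forall>n. {f n, f (Suc n)} \<in> Br G)"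
| "is_walk0 G (Both g) \<longleftrightarrow> (\<forall>n. {g n, g (n + 1)} \<in> Br G)"

fun nontrivial0 :: "'v walk0 \<Rightarrow> bool" where
  "nontrivial0 (Fin vs) \<longleftrightarrow> length vs \<ge> 2"
| "nontrivial0 _ \<longleftrightarrow> True"

fun lend :: "'v walk0 \<Rightarrow> 'v option" where
  "lend (Fin vs) = Some (hd vs)"
| "lend (InfR f) = Some (f 0)"
| "lend (InfL f) = None"
| "lend (Both g) = None"

fun rend :: "'v walk0 \<Rightarrow> 'v option" where
  "rend (Fin vs) = Some (last vs)"
| "rend (InfR f) = None"
| "rend (InfL f) = Some (f 0)"
| "rend (Both g) = None"

text \<open>The infinite side, read outwards, as a sequence (None if that side terminates).\<close>

fun ltail :: "'v walk0 \<Rightarrow> (nat \<Rightarrow> 'v) option" where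
  "ltail (InfL f) = Some f"
| "ltail (Both g) = Some (\<lambda>n. g (- int n))"
| "ltail _ = None"

fun rtail :: "'v walk0 \<Rightarrow> (nat \<Rightarrow> 'v) option" where
  "rtail (InfR f) = Some f"
| "rtail (Both g) = Some (\<lambda>n. g (int n))"
| "rtail _ = None"

definition reach_tip :: "(nat \<Rightarrow> 'v) option \<Rightarrow> 'v node \<Rightarrow> bool" where
  "reach_tip t x \<longleftrightarrow> (case (t, x) of
      (Some f, N1 n) \<Rightarrow> (\<exists>T\<in>fst n. \<exists>p\<in>T. evid f p)
    | _ \<Rightarrow> False)"

definition reach_side :: "'v option \<Rightarrow> (nat \<Rightarrow> 'v) option \<Rightarrow> 'v node \<Rightarrow> bool" where
  "reach_side e t x \<longleftrightarrow> (case x of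
      N0 v \<Rightarrow> e = Some v
    | N1 n \<Rightarrow> (\<exists>v. e = Some v \<and> snd n = Some v) \<or> reach_tip t x)"

definition reachL :: "'v walk0 \<Rightarrow> 'v node \<Rightarrow> bool" where
  "reachL W x = reach_side (lend W) (ltail W) x"

definition reachR :: "'v walk0 \<Rightarrow> 'v node \<Rightarrow> bool" where
  "reachR W x = reach_side (rend W) (rtail W) x"

fun len0 :: "'v walk0 \<Rightarrow> ord2" where
  "len0 (Fin vs) = (0, length vs - 1)"
| "len0 (InfR f) = (1, 0)"
| "len0 (InfL f) = (1, 0)"
| "len0 (Both g) = (2, 0)"

text \<open>A nontrivial two-ended 1-walk x_0, W_0, x_1, ..., W_(m-1), x_m with m \<ge> 1 is
  represented by the node list xs = [x_0, ..., x_m] and the 0-walk list ws = [W_0, ..., W_(m-1)].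
  W_k lies between x_k (on its left) and x_(k+1) (on its right).\<close>

definition is_walk1 :: "'v graph1 \<Rightarrow> 'v node list \<Rightarrow> 'v walk0 list \<Rightarrow> bool" where
  "is_walk1 G xs ws \<longleftrightarrow>
     length ws \<ge> 1 \<and> length xs = length ws + 1 \<and>
     set xs \<subseteq> nodes G \<and>
     (\<forall>k. 1 \<le> k \<and> k < length ws \<longrightarrow> (\<exists>n. xs ! k = N1 n)) \<and>
     (\<forall>k < length ws. is_walk0 G (ws ! k) \<and> nontrivial0 (ws ! k) \<and>
                     reachL (ws ! k) (xs ! k) \<and> reachR (ws ! k) (xs ! Suc k)) \<and>
     (\<forall>k. 1 \<le> k \<and> k < length ws \<longrightarrow>
          reach_tip (rtail (ws ! (k - 1))) (xs ! k) \<or> reach_tip (ltail (ws ! k)) (xs ! k))"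

definition len1 :: "'v walk0 list \<Rightarrow> ord2" where
  "len1 ws = foldr (\<lambda>W acc. len0 W \<oplus>\<^sub>o acc) ws (0, 0)"

definition wlengths :: "'v graph1 \<Rightarrow> 'v node \<Rightarrow> 'v node \<Rightarrow> ord2 set" where
  "wlengths G x y =
     {len0 (Fin vs) | vs a b. is_walk0 G (Fin vs) \<and> x = N0 a \<and> y = N0 b \<and>
                             {hd vs, last vs} = {a, b}}
   \<union> {len1 ws | xs ws. is_walk1 G xs ws \<and> {hd xs, last xs} = {x, y}}"

definition wdist :: "'v graph1 \<Rightarrow> 'v node \<Rightarrow> 'v node \<Rightarrow> ord2" where
  "wdist G x y = (if x = y then (0, 0) else (LEAST l. l \<in> wlengths G x y))"

definition wconnected1 :: "'v graph1 \<Rightarrow> bool" where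
  "wconnected1 G \<longleftrightarrow> (\<forall>x\<in>nodes G. \<forall>y\<in>nodes G. x \<noteq> y \<longrightarrow> wlengths G x y \<noteq> {})"

end

theory Submission
  imports Defs
begin

definition good :: "'v graph1 \<Rightarrow> 'v node \<Rightarrow> 'v walk0 \<Rightarrow> 'v node \<Rightarrow> bool" where
  "good G x W y \<longleftrightarrow> is_walk0 G W \<and> nontrivial0 W \<and> reachL W x \<and> reachR W y"

definition junc :: "'v walk0 \<Rightarrow> 'v node \<Rightarrow> 'v walk0 \<Rightarrow> bool" where
  "junc W1 y W2 \<longleftrightarrow> reach_tip (rtail W1) y \<or> reach_tip (ltail W2) y"

lemma reach_tip_N1: "reach_tip t y \<Longrightarrow> \<exists>n. y = N1 n"
  by (cases t; cases y) (auto simp: reach_tip_def)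

lemma walk1_len: "is_walk1 G xs ws \<Longrightarrow> length xs = length ws + 1 \<and> ws \<noteq> []"
  by (auto simp: is_walk1_def)

lemma walk1_single: "is_walk1 G [x, y] [W] \<longleftrightarrow> x \<in> nodes G \<and> y \<in> nodes G \<and> good G x W y"
  by (auto simp: is_walk1_def good_def)

lemma walk1_cons:
  assumes "ws \<noteq> []"
  shows "is_walk1 G (x # xs) (W # ws) \<longleftrightarrow>
     x \<in> nodes G \<and> good G x W (hd xs) \<and> junc W (hd xs) (hd ws) \<and> is_walk1 G xs ws"
proof
  assume a: "is_walk1 G (x # xs) (W # ws)"
  then have l: "length xs = length ws + 1" by (simp add: is_walk1_def)
  then have xs: "xs \<noteq> []" by auto
  have hx: "hd xs = xs ! 0" using xs by (simp add: hd_conv_nth)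
  have hw: "hd ws = ws ! 0" using assms by (simp add: hd_conv_nth)
  from a have 1: "x \<in> nodes G" by (simp add: is_walk1_def)
  from a have 2: "good G x W (hd xs)" using hx by (auto simp: is_walk1_def good_def)
  from a have 3: "junc W (hd xs) (hd ws)" using hx hw assms
    unfolding is_walk1_def junc_def
    by (metis (no_types, lifting) One_nat_def diff_Suc_1 le_add1 length_Cons length_greater_0_conv 
       less_Suc_eq_0_disj nth_Cons_0 nth_Cons_Suc plus_1_eq_Suc)
  have A: "1 \<le> length ws" using assms by (cases ws) auto
  have B: "set xs \<subseteq> nodes G" using a by (auto simp: is_walk1_def)
  have C: "\<forall>k. 1 \<le> k \<and> k < length ws \<longrightarrow> (\<exists>n. xs ! k = N1 n)"
  proof (intro allI impI)
    fix k assume "1 \<le> k \<and> k < length ws"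
    then have "1 \<le> Suc k \<and> Suc k < length (W # ws)" by simp
    then show "\<exists>n. xs ! k = N1 n" using a unfolding is_walk1_def by (metis nth_Cons_Suc)
  qed
  have D: "\<forall>k < length ws. is_walk0 G (ws ! k) \<and> nontrivial0 (ws ! k) \<and> reachL (ws ! k) (xs ! k) \<and> reachR (ws ! k) (xs ! Suc k)"
  proof (intro allI impI)
    fix k assume k: "k < length ws"
    then have "Suc k < length (W # ws)" by simp
    moreover from a have "\<forall>k < length (W # ws). is_walk0 G ((W # ws) ! k) \<and> nontrivial0 ((W # ws) ! k) \<and>
                     reachL ((W # ws) ! k) ((x # xs) ! k) \<and> reachR ((W # ws) ! k) ((x # xs) ! Suc k)"
      unfolding is_walk1_def by blast
    ultimately have "is_walk0 G ((W # ws) ! Suc k) \<and> nontrivial0 ((W # ws) ! Suc k) \<and>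
                     reachL ((W # ws) ! Suc k) ((x # xs) ! Suc k) \<and> reachR ((W # ws) ! Suc k) ((x # xs) ! Suc (Suc k))"
      by blast
    then show "is_walk0 G (ws ! k) \<and> nontrivial0 (ws ! k) \<and> reachL (ws ! k) (xs ! k) \<and> reachR (ws ! k) (xs ! Suc k)"
      by simp
  qed
  have E: "\<forall>k. 1 \<le> k \<and> k < length ws \<longrightarrow> reach_tip (rtail (ws ! (k - 1))) (xs ! k) \<or> reach_tip (ltail (ws ! k)) (xs ! k)"
  proof (intro allI impI)
    fix k assume k: "1 \<le> k \<and> k < length ws"
    then have "1 \<le> Suc k \<and> Suc k < length (W # ws)" by simp
    then have "reach_tip (rtail ((W # ws) ! (Suc k - 1))) ((x # xs) ! Suc k) \<or> reach_tip (ltail ((W # ws) ! Suc k)) ((x # xs) ! Suc k)"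
      using a unfolding is_walk1_def by blast
    then show "reach_tip (rtail (ws ! (k - 1))) (xs ! k) \<or> reach_tip (ltail (ws ! k)) (xs ! k)"
      using k by (cases k) auto
  qed
  have 4: "is_walk1 G xs ws" unfolding is_walk1_def using A l B C D E by blast
  show "x \<in> nodes G \<and> good G x W (hd xs) \<and> junc W (hd xs) (hd ws) \<and> is_walk1 G xs ws"
    using 1 2 3 4 by blast
next
  assume a: "x \<in> nodes G \<and> good G x W (hd xs) \<and> junc W (hd xs) (hd ws) \<and> is_walk1 G xs ws"
  then have l: "length xs = length ws + 1" and w: "is_walk1 G xs ws" by (auto simp: is_walk1_def)
  then have xs: "xs \<noteq> []" by auto
  have hx: "hd xs = xs ! 0" using xs by (simp add: hd_conv_nth)
  have hw: "hd ws = ws ! 0" using assms by (simp add: hd_conv_nth)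
  have B: "set (x # xs) \<subseteq> nodes G" using a w by (auto simp: is_walk1_def)
  have C: "\<forall>k. 1 \<le> k \<and> k < length (W # ws) \<longrightarrow> (\<exists>n. (x # xs) ! k = N1 n)"
  proof (intro allI impI)
    fix k assume k: "1 \<le> k \<and> k < length (W # ws)"
    then obtain j where j: "k = Suc j" by (cases k) auto
    show "\<exists>n. (x # xs) ! k = N1 n"
    proof (cases j)
      case 0
      have "junc W (hd xs) (hd ws)" using a by blast
      then have "\<exists>n. hd xs = N1 n" unfolding junc_def using reach_tip_N1 by blast
      then show ?thesis using j hx 0 by simp
    next
      case (Suc i)
      then show ?thesis using w j k unfolding is_walk1_def by auto
    qed
  qed
  have D: "\<forall>k < length (W # ws). is_walk0 G ((W # ws) ! k) \<and> nontrivial0 ((W # ws) ! k) \<and> reachL ((W # ws) ! k) ((x # xs) ! k) \<and> reachR ((W # ws) ! k) ((x # xs) ! Suc k)"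
  proof (intro allI impI)
    fix k assume k: "k < length (W # ws)"
    show "is_walk0 G ((W # ws) ! k) \<and> nontrivial0 ((W # ws) ! k) \<and> reachL ((W # ws) ! k) ((x # xs) ! k) \<and> reachR ((W # ws) ! k) ((x # xs) ! Suc k)"
    proof (cases k)
      case 0
      then show ?thesis using a hx by (auto simp: good_def)
    next
      case (Suc i)
      then show ?thesis using w k unfolding is_walk1_def by auto
    qed
  qed
  have E: "\<forall>k. 1 \<le> k \<and> k < length (W # ws) \<longrightarrow> reach_tip (rtail ((W # ws) ! (k - 1))) ((x # xs) ! k) \<or> reach_tip (ltail ((W # ws) ! k)) ((x # xs) ! k)"
  proof (intro allI impI)
    fix k assume k: "1 \<le> k \<and> k < length (W # ws)"
    then obtain j where j: "k = Suc j" by (cases k) auto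
    show "reach_tip (rtail ((W # ws) ! (k - 1))) ((x # xs) ! k) \<or> reach_tip (ltail ((W # ws) ! k)) ((x # xs) ! k)"
    proof (cases j)
      case 0
      then show ?thesis using a j hx hw unfolding junc_def by auto
    next
      case (Suc i)
      then have "1 \<le> j \<and> j < length ws" using k j by auto
      then show ?thesis using w j Suc unfolding is_walk1_def by auto
    qed
  qed
  show "is_walk1 G (x # xs) (W # ws)"
    unfolding is_walk1_def using l B C D E by simp
qed


lemma append_walk1:
  "is_walk1 G xs1 ws1 \<Longrightarrow> is_walk1 G xs2 ws2 \<Longrightarrow> last xs1 = hd xs2 \<Longrightarrow>
   junc (last ws1) (hd xs2) (hd ws2) \<Longrightarrow> is_walk1 G (xs1 @ tl xs2) (ws1 @ ws2)"
proof (induction ws1 arbitrary: xs1)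
  case Nil
  then show ?case by (simp add: is_walk1_def)
next
  case (Cons W ws)
  from Cons.prems(1) obtain x xs' where xs1: "xs1 = x # xs'"
    by (cases xs1) (auto simp: is_walk1_def)
  have l1: "length xs' = length ws + 1" using Cons.prems(1) xs1 by (simp add: is_walk1_def)
  have ws2: "ws2 \<noteq> []" and l2: "length xs2 = length ws2 + 1" using Cons.prems(2) walk1_len by blast+
  show ?case
  proof (cases "ws = []")
    case True
    then obtain y where xs': "xs' = [y]" using l1 by (cases xs') auto
    have "is_walk1 G [x, y] [W]" using Cons.prems(1) xs1 xs' True by simp
    then have a1: "x \<in> nodes G" and a2: "good G x W y" by (simp_all add: walk1_single)
    have yh: "y = hd xs2" using Cons.prems(3) xs1 xs' by simp
    have xs2: "xs2 = hd xs2 # tl xs2" using l2 by (cases xs2) auto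
    have j: "junc W (hd xs2) (hd ws2)" using Cons.prems(4) True by simp
    have "is_walk1 G (x # xs2) (W # ws2)"
      using walk1_cons[OF ws2, of G x xs2 W, THEN iffD2] a1 a2 yh j Cons.prems(2) by blast
    moreover have "xs1 @ tl xs2 = x # xs2" using xs1 xs' yh xs2 by (metis append_Cons append_Nil)
    ultimately show ?thesis using True by simp
  next
    case False
    have "is_walk1 G (x # xs') (W # ws)" using Cons.prems(1) xs1 by simp
    then have c: "x \<in> nodes G \<and> good G x W (hd xs') \<and> junc W (hd xs') (hd ws) \<and> is_walk1 G xs' ws"
      using walk1_cons[OF False, THEN iffD1] by blast
    have xs'ne: "xs' \<noteq> []" using l1 by auto
    have lx: "last xs' = hd xs2" using Cons.prems(3) xs1 xs'ne by simp
    have lw: "junc (last ws) (hd xs2) (hd ws2)" using Cons.prems(4) False by simp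
    have IH: "is_walk1 G (xs' @ tl xs2) (ws @ ws2)"
      using Cons.IH[of xs'] c Cons.prems(2) lx lw by blast
    have ne: "ws @ ws2 \<noteq> []" using False by simp
    have h1: "hd (xs' @ tl xs2) = hd xs'" using xs'ne by simp
    have h2: "hd (ws @ ws2) = hd ws" using False by simp
    have "is_walk1 G (x # (xs' @ tl xs2)) (W # (ws @ ws2))"
      using walk1_cons[OF ne, of G x "xs' @ tl xs2" W, THEN iffD2] c IH h1 h2 by simp
    then show ?thesis using xs1 by simp
  qed
qed

fun rev0 :: "'v walk0 \<Rightarrow> 'v walk0" where
  "rev0 (Fin vs) = Fin (rev vs)"
| "rev0 (InfR f) = InfL f"
| "rev0 (InfL f) = InfR f"
| "rev0 (Both g) = Both (\<lambda>i. g (- i))"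

lemma rev0_simps[simp]:
  "lend (rev0 W) = rend W" "rend (rev0 W) = lend W"
  "ltail (rev0 W) = rtail W" "rtail (rev0 W) = ltail W"
  "nontrivial0 (rev0 W) = nontrivial0 W" "len0 (rev0 W) = len0 W"
  by (cases W; simp add: hd_rev last_rev)+

lemma rev0_walk[simp]: "is_walk0 G (rev0 W) = is_walk0 G W"
proof (cases W)
  case (Fin vs)
  have "(\<forall>i. Suc i < length (rev vs) \<longrightarrow> {rev vs ! i, rev vs ! Suc i} \<in> Br G) \<longleftrightarrow>
        (\<forall>i. Suc i < length vs \<longrightarrow> {vs ! i, vs ! Suc i} \<in> Br G)"
  proof
    assume a: "\<forall>i. Suc i < length (rev vs) \<longrightarrow> {rev vs ! i, rev vs ! Suc i} \<in> Br G"
    show "\<forall>i. Suc i < length vs \<longrightarrow> {vs ! i, vs ! Suc i} \<in> Br G"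
    proof (intro allI impI)
      fix i assume i: "Suc i < length vs"
      have "{rev vs ! (length vs - Suc (Suc i)), rev vs ! Suc (length vs - Suc (Suc i))} \<in> Br G"
        using a i by simp
      moreover have "rev vs ! (length vs - Suc (Suc i)) = vs ! Suc i" using i by (simp add: rev_nth)
      moreover have "rev vs ! Suc (length vs - Suc (Suc i)) = vs ! i" using i
        by (simp add: rev_nth Suc_diff_Suc)
      ultimately show "{vs ! i, vs ! Suc i} \<in> Br G" by (simp add: insert_commute)
    qed
  next
    assume a: "\<forall>i. Suc i < length vs \<longrightarrow> {vs ! i, vs ! Suc i} \<in> Br G"
    show "\<forall>i. Suc i < length (rev vs) \<longrightarrow> {rev vs ! i, rev vs ! Suc i} \<in> Br G"
    proof (intro allI impI)
      fix i assume i: "Suc i < length (rev vs)"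
      have "{vs ! (length vs - Suc (Suc i)), vs ! Suc (length vs - Suc (Suc i))} \<in> Br G"
        using a i by simp
      moreover have "rev vs ! Suc i = vs ! (length vs - Suc (Suc i))" using i by (simp add: rev_nth)
      moreover have "rev vs ! i = vs ! Suc (length vs - Suc (Suc i))" using i
        by (simp add: rev_nth Suc_diff_Suc)
      ultimately show "{rev vs ! i, rev vs ! Suc i} \<in> Br G" by (simp add: insert_commute)
    qed
  qed
  then show ?thesis using Fin by simp
next
  case (Both g)
  have "(\<forall>n. {g (- n), g (- (n + 1))} \<in> Br G) \<longleftrightarrow> (\<forall>n. {g n, g (n + 1)} \<in> Br G)"
  proof
    assume a: "\<forall>n. {g (- n), g (- (n + 1))} \<in> Br G"
    show "\<forall>n. {g n, g (n + 1)} \<in> Br G"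
    proof
      fix n :: int
      have h: "{g (- (- n - 1)), g (- (- n - 1 + 1))} \<in> Br G" using a by blast
      have e1: "- (- n - 1 + 1) = n" and e2: "- (- n - 1) = n + 1" by simp_all
      from h have "{g (n + 1), g n} \<in> Br G" by (simp only: e1 e2)
      then show "{g n, g (n + 1)} \<in> Br G" by (metis insert_commute)
    qed
  next
    assume a: "\<forall>n. {g n, g (n + 1)} \<in> Br G"
    show "\<forall>n. {g (- n), g (- (n + 1))} \<in> Br G"
    proof
      fix n :: int
      have "{g (- n - 1), g (- n - 1 + 1)} \<in> Br G" using a by blast
      then show "{g (- n), g (- (n + 1))} \<in> Br G" by (simp add: insert_commute)
    qed
  qed
  then show ?thesis using Both by simp
qed auto

lemma reachL_rev0[simp]: "reachL (rev0 W) x = reachR W x" and reachR_rev0[simp]: "reachR (rev0 W) x = reachL W x"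
  by (simp_all add: reachL_def reachR_def)

lemma good_rev0: "good G y (rev0 W) x = good G x W y"
  by (auto simp: good_def)

lemma junc_rev0: "junc (rev0 W2) y (rev0 W1) = junc W1 y W2"
  by (auto simp: junc_def)

lemma rev_walk1:
  "is_walk1 G xs ws \<Longrightarrow> is_walk1 G (rev xs) (rev (map rev0 ws))"
proof (induction ws arbitrary: xs)
  case Nil
  then show ?case by (simp add: is_walk1_def)
next
  case (Cons W ws)
  from Cons.prems(1) obtain x xs' where xs: "xs = x # xs'"
    by (cases xs) (auto simp: is_walk1_def)
  have l1: "length xs' = length ws + 1" using Cons.prems(1) xs by (simp add: is_walk1_def)
  show ?case
  proof (cases "ws = []")
    case True
    then obtain y where xs': "xs' = [y]" using l1 by (cases xs') auto
    have "is_walk1 G [x, y] [W]" using Cons.prems(1) xs xs' True by simp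
    then show ?thesis using xs xs' True by (simp add: walk1_single good_rev0)
  next
    case False
    have c: "x \<in> nodes G \<and> good G x W (hd xs') \<and> junc W (hd xs') (hd ws) \<and> is_walk1 G xs' ws"
      using Cons.prems(1) xs walk1_cons[OF False] by simp
    have xs'ne: "xs' \<noteq> []" using l1 by auto
    have IH: "is_walk1 G (rev xs') (rev (map rev0 ws))" using Cons.IH c by blast
    have "hd xs' \<in> nodes G" using c xs'ne by (auto simp: is_walk1_def)
    then have s: "is_walk1 G [hd xs', x] [rev0 W]"
      using c walk1_single[of G "hd xs'" x "rev0 W"] Cons.prems(1) xs'ne
      by (simp add: good_rev0 is_walk1_def xs)
    have j: "junc (last (rev (map rev0 ws))) (hd [hd xs', x]) (hd [rev0 W])"
      using c False by (simp add: last_rev hd_map junc_rev0)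
    have "is_walk1 G (rev xs' @ tl [hd xs', x]) (rev (map rev0 ws) @ [rev0 W])"
      using append_walk1[OF IH s _ j] xs'ne by (simp add: last_rev)
    then show ?thesis using xs by simp
  qed
qed


definition cat :: "'v list \<Rightarrow> (nat \<Rightarrow> 'v) \<Rightarrow> nat \<Rightarrow> 'v" where
  "cat a f n = (if n < length a then a ! n else f (Suc (n - length a)))"

fun merge :: "'v walk0 \<Rightarrow> 'v walk0 \<Rightarrow> 'v walk0" where
  "merge (Fin a) (Fin b) = Fin (a @ tl b)"
| "merge (Fin a) (InfR f) = InfR (cat a f)"
| "merge (InfL f) (Fin b) = InfL (cat (rev b) f)"
| "merge (InfL f) (InfR h) = Both (\<lambda>i. if 0 \<le> i then h (nat i) else f (nat (- i)))"
| "merge W1 W2 = W1"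

definition tailsim :: "(nat \<Rightarrow> 'v) option \<Rightarrow> (nat \<Rightarrow> 'v) option \<Rightarrow> bool" where
  "tailsim t s \<longleftrightarrow> (\<forall>x. reach_tip t x \<longrightarrow> reach_tip s x)"

definition lsim :: "'v walk0 \<Rightarrow> 'v walk0 \<Rightarrow> bool" where
  "lsim M W \<longleftrightarrow> lend M = lend W \<and> tailsim (ltail W) (ltail M)"

definition rsim :: "'v walk0 \<Rightarrow> 'v walk0 \<Rightarrow> bool" where
  "rsim M W \<longleftrightarrow> rend M = rend W \<and> tailsim (rtail W) (rtail M)"

lemma tailsim_refl[simp]: "tailsim t t"
  by (simp add: tailsim_def)

lemma tailsim_None[simp]: "tailsim None s"
  by (simp add: tailsim_def reach_tip_def)

lemma evid_shift:
  assumes "\<forall>k. g (c + k) = f (d + k)" and "evid f p"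
  shows "evid g p"
proof -
  from assms(2) obtain i j where ij: "\<forall>k. f (i + k) = p (j + k)" by (auto simp: evid_def)
  have "\<forall>k. g ((c + i) + k) = p ((j + d) + k)"
  proof
    fix k
    have "g ((c + i) + k) = g (c + (i + k))" by (simp add: add.assoc)
    also have "\<dots> = f (d + (i + k))" using assms(1) by blast
    also have "\<dots> = f (i + (d + k))" by (simp add: algebra_simps)
    also have "\<dots> = p (j + (d + k))" using ij by blast
    also have "\<dots> = p ((j + d) + k)" by (simp add: add.assoc)
    finally show "g ((c + i) + k) = p ((j + d) + k)" .
  qed
  then show ?thesis unfolding evid_def by blast
qed

lemma tailsim_shift:
  assumes "\<forall>k. g (c + k) = f (d + k)"
  shows "tailsim (Some f) (Some g)"
  unfolding tailsim_def
proof (intro allI impI)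
  fix x assume "reach_tip (Some f) x"
  then show "reach_tip (Some g) x"
    using evid_shift[OF assms] by (cases x) (auto simp: reach_tip_def)
qed

lemma lsim_reachL: "lsim M W \<Longrightarrow> reachL W x \<Longrightarrow> reachL M x"
  by (cases x) (auto simp: lsim_def tailsim_def reachL_def reach_side_def)

lemma rsim_reachR: "rsim M W \<Longrightarrow> reachR W x \<Longrightarrow> reachR M x"
  by (cases x) (auto simp: rsim_def tailsim_def reachR_def reach_side_def)

lemma rsim_junc: "rsim M W \<Longrightarrow> junc W y W' \<Longrightarrow> junc M y W'"
  by (auto simp: rsim_def tailsim_def junc_def)

lemma lsim_junc: "lsim M W \<Longrightarrow> junc W0 y W \<Longrightarrow> junc W0 y M"
  by (auto simp: lsim_def tailsim_def junc_def)

lemma cat_walk: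
  assumes a: "is_walk0 G (Fin a)" and f: "\<forall>n. {f n, f (Suc n)} \<in> Br G" and l: "last a = f 0"
  shows "\<forall>n. {cat a f n, cat a f (Suc n)} \<in> Br G"
proof
  fix n
  have ne: "a \<noteq> []" using a by simp
  consider "Suc n < length a" | "Suc n = length a" | "length a \<le> n" by linarith
  then show "{cat a f n, cat a f (Suc n)} \<in> Br G"
  proof cases
    case 1
    then show ?thesis using a by (simp add: cat_def)
  next
    case 2
    then have "n = length a - 1" by simp
    then have "cat a f n = f 0" using l ne 2 by (simp add: cat_def last_conv_nth)
    moreover have "cat a f (Suc n) = f (Suc 0)" using 2 by (simp add: cat_def)
    ultimately show ?thesis using f by metis
  next
    case 3
    then have "cat a f n = f (Suc (n - length a))" "cat a f (Suc n) = f (Suc (Suc (n - length a)))"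
      by (simp_all add: cat_def Suc_diff_le)
    then show ?thesis using f by metis
  qed
qed

lemma cat_shift: "\<forall>k. cat a f (length a + k) = f (1 + k)"
  by (simp add: cat_def)

lemma merge_FinFin:
  assumes a: "is_walk0 G (Fin a)" and b: "is_walk0 G (Fin b)" and na: "nontrivial0 (Fin a)"
    and nb: "nontrivial0 (Fin b)" and l: "last a = hd b"
  shows "is_walk0 G (Fin (a @ tl b)) \<and> nontrivial0 (Fin (a @ tl b)) \<and> lsim (Fin (a @ tl b)) (Fin a)
     \<and> rsim (Fin (a @ tl b)) (Fin b) \<and> len0 (Fin (a @ tl b)) \<le> len0 (Fin a) \<oplus>\<^sub>o len0 (Fin b)"
proof -
  have la: "length a \<ge> 2" and lb: "length b \<ge> 2" using na nb by auto
  have tlne: "tl b \<noteq> []" using lb by (cases b) auto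
  have e: "\<forall>i. Suc i < length (a @ tl b) \<longrightarrow> {(a @ tl b) ! i, (a @ tl b) ! Suc i} \<in> Br G"
  proof (intro allI impI)
    fix i assume i: "Suc i < length (a @ tl b)"
    consider "Suc i < length a" | "Suc i = length a" | "length a \<le> i" by linarith
    then show "{(a @ tl b) ! i, (a @ tl b) ! Suc i} \<in> Br G"
    proof cases
      case 1
      then show ?thesis using a by (simp add: nth_append)
    next
      case 2
      then have "(a @ tl b) ! i = b ! 0" using l la
        by (simp add: nth_append last_conv_nth hd_conv_nth lb)
        (metis diff_Suc_1 hd_conv_nth l last_conv_nth list.size(3) not_numeral_le_zero lb)
      moreover have "(a @ tl b) ! Suc i = b ! Suc 0" using 2 lb by (simp add: nth_append nth_tl)
      moreover have "Suc 0 < length b" using lb by simp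
      ultimately show ?thesis using b by simp
    next
      case 3
      have "(a @ tl b) ! i = b ! Suc (i - length a)" using 3 i by (simp add: nth_append nth_tl)
      moreover have "(a @ tl b) ! Suc i = b ! Suc (Suc (i - length a))" using 3 i
        by (simp add: nth_append nth_tl Suc_diff_le)
      moreover have "Suc (Suc (i - length a)) < length b" using 3 i by simp
      ultimately show ?thesis using b by simp
    qed
  qed
  have "set (a @ tl b) \<subseteq> X0 G" using a b by (cases b) auto
  then have w: "is_walk0 G (Fin (a @ tl b))" using e la by auto
  have n: "nontrivial0 (Fin (a @ tl b))" using la by simp
  have "a \<noteq> []" using la by auto
  then have ls: "lsim (Fin (a @ tl b)) (Fin a)" by (auto simp: lsim_def)
  have "last (tl b) = last b" using tlne by (cases b) auto
  then have rs: "rsim (Fin (a @ tl b)) (Fin b)" using tlne by (auto simp: rsim_def)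
  have len: "len0 (Fin (a @ tl b)) \<le> len0 (Fin a) \<oplus>\<^sub>o len0 (Fin b)"
    using la lb by (simp add: natsum_def)
  show ?thesis using w n ls rs len by blast
qed


lemma merge_FinR:
  assumes a: "is_walk0 G (Fin a)" and f: "is_walk0 G (InfR f)" and l: "last a = f 0"
  shows "is_walk0 G (InfR (cat a f)) \<and> nontrivial0 (InfR (cat a f)) \<and> lsim (InfR (cat a f)) (Fin a)
     \<and> rsim (InfR (cat a f)) (InfR f) \<and> len0 (InfR (cat a f)) \<le> len0 (Fin a) \<oplus>\<^sub>o len0 (InfR f)"
proof -
  have ne: "a \<noteq> []" using a by simp
  have "\<forall>n. {cat a f n, cat a f (Suc n)} \<in> Br G" using cat_walk[of G a f] a f l by simp
  then have w: "is_walk0 G (InfR (cat a f))" by simp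
  have "cat a f 0 = hd a" using ne by (simp add: cat_def hd_conv_nth)
  then have ls: "lsim (InfR (cat a f)) (Fin a)" by (simp add: lsim_def)
  have rs: "rsim (InfR (cat a f)) (InfR f)"
    using tailsim_shift[of "cat a f" "length a" f 1] cat_shift[of a f] by (simp add: rsim_def)
  show ?thesis using w ls rs by (simp add: natsum_def)
qed

lemma merge_LFin:
  assumes f: "is_walk0 G (InfL f)" and b: "is_walk0 G (Fin b)" and l: "hd b = f 0"
  shows "is_walk0 G (InfL (cat (rev b) f)) \<and> nontrivial0 (InfL (cat (rev b) f)) \<and> lsim (InfL (cat (rev b) f)) (InfL f)
     \<and> rsim (InfL (cat (rev b) f)) (Fin b) \<and> len0 (InfL (cat (rev b) f)) \<le> len0 (InfL f) \<oplus>\<^sub>o len0 (Fin b)"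
proof -
  have ne: "b \<noteq> []" using b by simp
  have b': "is_walk0 G (Fin (rev b))" using rev0_walk[of G "Fin b"] b by simp
  have "\<forall>n. {cat (rev b) f n, cat (rev b) f (Suc n)} \<in> Br G"
    using cat_walk[of G "rev b" f] b' f l by (simp add: last_rev)
  then have w: "is_walk0 G (InfL (cat (rev b) f))" by simp
  have "cat (rev b) f 0 = last b" using ne by (simp add: cat_def hd_conv_nth[symmetric] hd_rev)
  then have rs: "rsim (InfL (cat (rev b) f)) (Fin b)" by (simp add: rsim_def)
  have ls: "lsim (InfL (cat (rev b) f)) (InfL f)"
    using tailsim_shift[of "cat (rev b) f" "length (rev b)" f 1] cat_shift[of "rev b" f] by (simp add: lsim_def)
  show ?thesis using w ls rs by (simp add: natsum_def)
qed

lemma merge_LR: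
  assumes f: "is_walk0 G (InfL f)" and h: "is_walk0 G (InfR h)" and l: "f 0 = h 0"
  defines "g \<equiv> (\<lambda>i::int. if 0 \<le> i then h (nat i) else f (nat (- i)))"
  shows "is_walk0 G (Both g) \<and> nontrivial0 (Both g) \<and> lsim (Both g) (InfL f)
     \<and> rsim (Both g) (InfR h) \<and> len0 (Both g) \<le> len0 (InfL f) \<oplus>\<^sub>o len0 (InfR h)"
proof -
  have w: "\<forall>n. {g n, g (n + 1)} \<in> Br G"
  proof
    fix n :: int
    consider "0 \<le> n" | "n = -1" | "n \<le> -2" by linarith
    then show "{g n, g (n + 1)} \<in> Br G"
    proof cases
      case 1
      then have "g n = h (nat n)" "g (n + 1) = h (Suc (nat n))" by (simp_all add: g_def nat_add_distrib)
      then show ?thesis using h by simp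
    next
      case 2
      then have "g n = f (Suc 0)" "g (n + 1) = f 0" using l by (simp_all add: g_def)
      then show ?thesis using f by (simp add: insert_commute)
    next
      case 3
      define m where "m = nat (- n - 1)"
      have "g n = f (Suc m)" "g (n + 1) = f m" using 3 by (simp_all add: g_def m_def nat_diff_distrib' Suc_nat_eq_nat_zadd1)
      then show ?thesis using f by (simp add: insert_commute)
    qed
  qed
  have lt: "(\<lambda>n. g (- int n)) = f"
  proof
    fix n
    have e: "\<And>k::nat. nat (int k + 1) = Suc k" by arith
    show "g (- int n) = f n" using l by (cases n) (simp_all add: g_def e)
  qed
  have rt: "(\<lambda>n. g (int n)) = h" by (simp add: g_def)
  show ?thesis using w lt rt by (simp add: lsim_def rsim_def natsum_def)
qed

lemma merge_props:
  assumes "is_walk0 G W1" "is_walk0 G W2" "nontrivial0 W1" "nontrivial0 W2"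
    "rend W1 = Some v" "lend W2 = Some v"
  shows "is_walk0 G (merge W1 W2) \<and> nontrivial0 (merge W1 W2) \<and> lsim (merge W1 W2) W1
     \<and> rsim (merge W1 W2) W2 \<and> len0 (merge W1 W2) \<le> len0 W1 \<oplus>\<^sub>o len0 W2"
proof (cases W1)
  case (Fin a)
  show ?thesis
  proof (cases W2)
    case (Fin b)
    then show ?thesis using merge_FinFin[of G a b] assms \<open>W1 = Fin a\<close> by simp
  next
    case (InfR f)
    then show ?thesis using merge_FinR[of G a f] assms \<open>W1 = Fin a\<close> by simp
  qed (use assms in auto)
next
  case (InfL f)
  show ?thesis
  proof (cases W2)
    case (Fin b)
    then show ?thesis using merge_LFin[of G f b] assms \<open>W1 = InfL f\<close> by simp
  next
    case (InfR h)
    then show ?thesis using merge_LR[of G f h] assms \<open>W1 = InfL f\<close> by simp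
  qed (use assms in auto)
qed (use assms in auto)


lemma walk1_hd_last:
  assumes "is_walk1 G xs ws"
  shows "\<exists>b. good G (hd xs) (hd ws) b" and "\<exists>a. good G a (last ws) (last xs)"
proof -
  have l: "length xs = length ws + 1" and ne: "ws \<noteq> []" using walk1_len[OF assms] by auto
  have all: "\<forall>k < length ws. is_walk0 G (ws ! k) \<and> nontrivial0 (ws ! k) \<and> reachL (ws ! k) (xs ! k) \<and> reachR (ws ! k) (xs ! Suc k)"
    using assms by (simp add: is_walk1_def)
  have "0 < length ws" using ne by simp
  then have "good G (xs ! 0) (ws ! 0) (xs ! 1)" using all by (simp add: good_def)
  moreover have "xs \<noteq> []" using l by auto
  then have "xs ! 0 = hd xs" "ws ! 0 = hd ws" using ne by (simp_all add: hd_conv_nth)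
  ultimately show "\<exists>b. good G (hd xs) (hd ws) b" by metis
  have "length ws - 1 < length ws" using ne by simp
  then have "good G (xs ! (length ws - 1)) (ws ! (length ws - 1)) (xs ! Suc (length ws - 1))"
    using all by (simp add: good_def)
  moreover have "ws ! (length ws - 1) = last ws" using ne by (simp add: last_conv_nth)
  moreover have "xs ! Suc (length ws - 1) = last xs" using l ne \<open>xs \<noteq> []\<close> by (simp add: last_conv_nth)
  ultimately show "\<exists>a. good G a (last ws) (last xs)" by metis
qed

lemma merge_front:
  assumes x: "x \<in> nodes G" and g: "good G x W1 y" and w: "is_walk1 G (y # xs) (W2 # ws)"
    and v1: "rend W1 = Some v" and v2: "lend W2 = Some v"
  shows "is_walk1 G (x # xs) (merge W1 W2 # ws)"
proof -
  obtain b where gb: "good G y W2 b" using walk1_hd_last(1)[OF w] by auto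
  have "is_walk0 G W2" "nontrivial0 W2" using gb by (auto simp: good_def)
  then have mp: "is_walk0 G (merge W1 W2) \<and> nontrivial0 (merge W1 W2) \<and> lsim (merge W1 W2) W1
     \<and> rsim (merge W1 W2) W2" using merge_props[of G W1 W2 v] g v1 v2 by (auto simp: good_def)
  have l: "length xs = length ws + 1" using w by (simp add: is_walk1_def)
  show ?thesis
  proof (cases "ws = []")
    case True
    then obtain z where xs: "xs = [z]" using l by (cases xs) auto
    have "is_walk1 G [y, z] [W2]" using w xs True by simp
    then have "z \<in> nodes G" "good G y W2 z" by (simp_all add: walk1_single)
    moreover have "good G x (merge W1 W2) z"
      using mp g \<open>good G y W2 z\<close> lsim_reachL rsim_reachR by (auto simp: good_def)
    ultimately show ?thesis using x xs True by (simp add: walk1_single)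
  next
    case False
    have c: "y \<in> nodes G \<and> good G y W2 (hd xs) \<and> junc W2 (hd xs) (hd ws) \<and> is_walk1 G xs ws"
      using w walk1_cons[OF False, THEN iffD1] by blast
    have "good G x (merge W1 W2) (hd xs)"
      using mp g c lsim_reachL rsim_reachR by (auto simp: good_def)
    moreover have "junc (merge W1 W2) (hd xs) (hd ws)" using mp c rsim_junc by blast
    ultimately show ?thesis using walk1_cons[OF False, THEN iffD2] x c by blast
  qed
qed

lemma merge_walk1:
  "is_walk1 G xs1 ws1 \<Longrightarrow> is_walk1 G xs2 ws2 \<Longrightarrow> last xs1 = hd xs2 \<Longrightarrow>
   rend (last ws1) = Some v \<Longrightarrow> lend (hd ws2) = Some v \<Longrightarrow>
   is_walk1 G (butlast xs1 @ tl xs2) (butlast ws1 @ merge (last ws1) (hd ws2) # tl ws2)"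
proof (induction ws1 arbitrary: xs1)
  case Nil
  then show ?case by (simp add: is_walk1_def)
next
  case (Cons W ws)
  from Cons.prems(1) obtain x xs' where xs1: "xs1 = x # xs'"
    by (cases xs1) (auto simp: is_walk1_def)
  have l1: "length xs' = length ws + 1" using Cons.prems(1) xs1 by (simp add: is_walk1_def)
  have ws2: "ws2 \<noteq> []" and l2: "length xs2 = length ws2 + 1" using Cons.prems(2) walk1_len by blast+
  have xs2: "xs2 = hd xs2 # tl xs2" using l2 by (cases xs2) auto
  have ws2e: "ws2 = hd ws2 # tl ws2" using ws2 by simp
  show ?case
  proof (cases "ws = []")
    case True
    then obtain y where xs': "xs' = [y]" using l1 by (cases xs') auto
    have "is_walk1 G [x, y] [W]" using Cons.prems(1) xs1 xs' True by simp
    then have a1: "x \<in> nodes G" and a2: "good G x W y" by (simp_all add: walk1_single)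
    have yh: "y = hd xs2" using Cons.prems(3) xs1 xs' by simp
    have w2: "is_walk1 G (y # tl xs2) (hd ws2 # tl ws2)" using Cons.prems(2) xs2 ws2e yh by metis
    have "is_walk1 G (x # tl xs2) (merge W (hd ws2) # tl ws2)"
      using merge_front[OF a1 a2 w2, of v] Cons.prems(4,5) True by simp
    then show ?thesis using xs1 xs' True by simp
  next
    case False
    have "is_walk1 G (x # xs') (W # ws)" using Cons.prems(1) xs1 by simp
    then have c: "x \<in> nodes G \<and> good G x W (hd xs') \<and> junc W (hd xs') (hd ws) \<and> is_walk1 G xs' ws"
      using walk1_cons[OF False, THEN iffD1] by blast
    have l1': "length xs' \<ge> 2" using l1 False by (cases ws) auto
    have xs'ne: "xs' \<noteq> []" and bxs: "butlast xs' \<noteq> []" using l1' by (cases xs'; auto)+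
    have lx: "last xs' = hd xs2" using Cons.prems(3) xs1 xs'ne by simp
    have lw: "rend (last ws) = Some v" using Cons.prems(4) False by simp
    define M where "M = merge (last ws) (hd ws2)"
    have IH: "is_walk1 G (butlast xs' @ tl xs2) (butlast ws @ M # tl ws2)"
      using Cons.IH[of xs'] c Cons.prems(2,5) lx lw M_def by blast
    have ne: "butlast ws @ M # tl ws2 \<noteq> []" by simp
    have h1: "hd (butlast xs' @ tl xs2) = hd xs'" using bxs
      by (metis append_butlast_last_id hd_append2 xs'ne)
    have j: "junc W (hd xs') (hd (butlast ws @ M # tl ws2))"
    proof (cases "butlast ws = []")
      case True
      then obtain W' where ws: "ws = [W']" using False by (cases ws) (auto split: if_splits)
      have "is_walk1 G xs' [W']" using c ws by simp
      then obtain a where ga: "good G a W' (last xs')" using walk1_hd_last(2) by fastforce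
      obtain b where gb: "good G (hd xs2) (hd ws2) b" using walk1_hd_last(1)[OF Cons.prems(2)] by blast
      have "lsim M W'" using merge_props[of G W' "hd ws2" v] ga gb lw Cons.prems(5) ws M_def
        by (simp add: good_def)
      moreover have "junc W (hd xs') W'" using c ws by simp
      ultimately have "junc W (hd xs') M" using lsim_junc by blast
      then show ?thesis using True by simp
    next
      case f2: False
      have "hd (butlast ws) = hd ws" using f2 by (metis append_butlast_last_id hd_append2 False)
      then show ?thesis using c f2 by simp
    qed
    have "is_walk1 G (x # (butlast xs' @ tl xs2)) (W # (butlast ws @ M # tl ws2))"
      using walk1_cons[OF ne, of G x "butlast xs' @ tl xs2" W, THEN iffD2] c IH h1 j by simp
    moreover have "butlast xs1 = x # butlast xs'" using xs1 xs'ne by simp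
    moreover have "butlast (W # ws) = W # butlast ws" using False by simp
    moreover have "last (W # ws) = last ws" using False by simp
    ultimately show ?thesis using M_def by simp
  qed
qed


lemma len1_Nil[simp]: "len1 [] = (0, 0)"
  by (simp add: len1_def)

lemma len1_Cons[simp]: "len1 (W # ws) = len0 W \<oplus>\<^sub>o len1 ws"
  by (simp add: len1_def)

lemma natsum_0[simp]: "p \<oplus>\<^sub>o (0, 0) = p" "(0, 0) \<oplus>\<^sub>o p = p"
  by (cases p; simp add: natsum_def)+

lemma natsum_assoc: "(p \<oplus>\<^sub>o q) \<oplus>\<^sub>o r = p \<oplus>\<^sub>o (q \<oplus>\<^sub>o r)"
  by (simp add: natsum_def)

lemma natsum_comm: "p \<oplus>\<^sub>o q = q \<oplus>\<^sub>o p"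
  by (simp add: natsum_def)

lemma len1_append: "len1 (xs @ ys) = len1 xs \<oplus>\<^sub>o len1 ys"
  by (induction xs) (simp_all add: natsum_assoc)

lemma len1_rev: "len1 (rev (map rev0 ws)) = len1 ws"
  by (induction ws) (simp_all add: len1_append natsum_comm)

lemma natsum_zero: "p \<oplus>\<^sub>o q = (0, 0) \<Longrightarrow> p = (0, 0)"
  by (cases p; cases q) (simp add: natsum_def)

lemma len0_nz: "nontrivial0 W \<Longrightarrow> len0 W \<noteq> (0, 0)"
  by (cases W) auto

lemma len1_nz: "is_walk1 G xs ws \<Longrightarrow> len1 ws \<noteq> (0, 0)"
proof -
  assume w: "is_walk1 G xs ws"
  then obtain b where "good G (hd xs) (hd ws) b" using walk1_hd_last(1) by blast
  then have "len0 (hd ws) \<noteq> (0, 0)" using len0_nz by (auto simp: good_def)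
  moreover have "ws = hd ws # tl ws" using walk1_len[OF w] by simp
  ultimately show ?thesis using natsum_zero by (metis len1_Cons)
qed

lemma ineq_aux:
  fixes m p q A C :: "nat \<times> nat"
  assumes "m \<le> p \<oplus>\<^sub>o q"
  shows "A \<oplus>\<^sub>o (m \<oplus>\<^sub>o C) \<le> (A \<oplus>\<^sub>o (p \<oplus>\<^sub>o (0, 0))) \<oplus>\<^sub>o (q \<oplus>\<^sub>o C)"
  using assms by (cases m; cases p; cases q; cases A; cases C) (auto simp: natsum_def)

lemma zero_le_pair[simp]: "(0, 0) \<le> (p :: nat \<times> nat)"
  by (cases p) simp

lemma fin_walk1:
  assumes "is_walk0 G (Fin vs)" "length vs \<ge> 2" "hd vs = a" "last vs = b" "N0 a \<in> nodes G" "N0 b \<in> nodes G"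
  shows "is_walk1 G [N0 a, N0 b] [Fin vs]"
  using assms by (simp add: walk1_single good_def reachL_def reachR_def reach_side_def)

lemma wl_eq:
  assumes xy: "x \<noteq> y" and x: "x \<in> nodes G" and y: "y \<in> nodes G"
  shows "wlengths G x y = {len1 ws | xs ws. is_walk1 G xs ws \<and> hd xs = x \<and> last xs = y}"
proof
  show "wlengths G x y \<subseteq> {len1 ws | xs ws. is_walk1 G xs ws \<and> hd xs = x \<and> last xs = y}"
  proof
    fix l assume "l \<in> wlengths G x y"
    then consider (F) vs a b where "l = len0 (Fin vs)" "is_walk0 G (Fin vs)" "x = N0 a" "y = N0 b" "{hd vs, last vs} = {a, b}"
      | (W) xs ws where "l = len1 ws" "is_walk1 G xs ws" "{hd xs, last xs} = {x, y}"
      unfolding wlengths_def by blast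
    then show "l \<in> {len1 ws | xs ws. is_walk1 G xs ws \<and> hd xs = x \<and> last xs = y}"
    proof cases
      case F
      have ab: "a \<noteq> b" using F xy by auto
      have ne: "vs \<noteq> []" using F by simp
      have l2: "length vs \<ge> 2"
      proof (rule ccontr)
        assume "\<not> length vs \<ge> 2"
        moreover have "length vs \<noteq> 0" using ne by simp
        ultimately have "length vs = 1" by linarith
        then have "length (tl vs) = 0" by simp
        then have "tl vs = []" by blast
        then have "vs = [hd vs]" using ne by (metis list.collapse)
        then have "hd vs = last vs" by (metis last.simps)
        then show False using F ab by (auto simp: doubleton_eq_iff)
      qed
      from F(5) ab have "(hd vs = a \<and> last vs = b) \<or> (hd vs = b \<and> last vs = a)"
        by (auto simp: doubleton_eq_iff)
      then show ?thesis
      proof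
        assume h: "hd vs = a \<and> last vs = b"
        have "is_walk1 G [N0 a, N0 b] [Fin vs]" using fin_walk1[of G vs a b] F h l2 x y by simp
        moreover have "l = len1 [Fin vs]" using F by simp
        ultimately show ?thesis using F by fastforce
      next
        assume h: "hd vs = b \<and> last vs = a"
        have "is_walk0 G (Fin (rev vs))" using F rev0_walk[of G "Fin vs"] by simp
        then have "is_walk1 G [N0 a, N0 b] [Fin (rev vs)]"
          using fin_walk1[of G "rev vs" a b] F h l2 x y by (simp add: hd_rev last_rev)
        moreover have "l = len1 [Fin (rev vs)]" using F by simp
        ultimately show ?thesis using F by fastforce
      qed
    next
      case W
      from W(3) xy have "(hd xs = x \<and> last xs = y) \<or> (hd xs = y \<and> last xs = x)"
        by (auto simp: doubleton_eq_iff)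
      then show ?thesis
      proof
        assume "hd xs = x \<and> last xs = y"
        then show ?thesis using W by blast
      next
        assume h: "hd xs = y \<and> last xs = x"
        have "is_walk1 G (rev xs) (rev (map rev0 ws))" using rev_walk1 W by blast
        moreover have "hd (rev xs) = x" "last (rev xs) = y" using h by (simp_all add: hd_rev last_rev)
        moreover have "l = len1 (rev (map rev0 ws))" using W(1) len1_rev[of ws] by metis
        ultimately show ?thesis by blast
      qed
    qed
  qed
next
  show "{len1 ws | xs ws. is_walk1 G xs ws \<and> hd xs = x \<and> last xs = y} \<subseteq> wlengths G x y"
    unfolding wlengths_def by blast
qed

lemma wl_sym: "l \<in> wlengths G x y \<Longrightarrow> l \<in> wlengths G y x"
  unfolding wlengths_def by (auto simp: insert_commute)

lemma wl_sym_eq: "wlengths G x y = wlengths G y x"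
  using wl_sym by blast

lemma wdist_sym: "wdist G x y = wdist G y x"
  unfolding wdist_def using wl_sym_eq[of G x y] by auto

lemma no_junc:
  assumes "reachR W y" "reachL W' y" "\<not> junc W y W'"
  shows "\<exists>v. rend W = Some v \<and> lend W' = Some v"
  using assms by (cases y) (auto simp: reachR_def reachL_def reach_side_def junc_def)

lemma wdist_least:
  assumes "wlengths G x y \<noteq> {}" "x \<noteq> y"
  shows "wdist G x y \<in> wlengths G x y" "\<And>l. l \<in> wlengths G x y \<Longrightarrow> wdist G x y \<le> l"
  using assms by (auto simp: wdist_def intro: LeastI_ex Least_le)

lemma triangle:
  assumes conn: "wconnected1 G" and x: "x \<in> nodes G" and y: "y \<in> nodes G" and z: "z \<in> nodes G"
    and xy: "x \<noteq> y" and yz: "y \<noteq> z" and xz: "x \<noteq> z"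
  shows "wdist G x z \<le> wdist G x y \<oplus>\<^sub>o wdist G y z"
proof -
  have ne1: "wlengths G x y \<noteq> {}" and ne2: "wlengths G y z \<noteq> {}" and ne3: "wlengths G x z \<noteq> {}"
    using conn x y z xy yz xz by (auto simp: wconnected1_def)
  have "wdist G x y \<in> wlengths G x y" using wdist_least(1)[OF ne1 xy] .
  then obtain xs1 ws1 where w1: "is_walk1 G xs1 ws1" "hd xs1 = x" "last xs1 = y" "len1 ws1 = wdist G x y"
    using wl_eq[OF xy x y] by auto
  have "wdist G y z \<in> wlengths G y z" using wdist_least(1)[OF ne2 yz] .
  then obtain xs2 ws2 where w2: "is_walk1 G xs2 ws2" "hd xs2 = y" "last xs2 = z" "len1 ws2 = wdist G y z"
    using wl_eq[OF yz y z] by auto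
  have l1: "length xs1 = length ws1 + 1" "ws1 \<noteq> []" using walk1_len[OF w1(1)] by auto
  have l2: "length xs2 = length ws2 + 1" "ws2 \<noteq> []" using walk1_len[OF w2(1)] by auto
  have xs1ne: "xs1 \<noteq> []" and bxs1: "butlast xs1 \<noteq> []" using l1 by (cases xs1; auto)+
  have tl2: "tl xs2 \<noteq> []" using l2 by (cases xs2; auto)
  have lt2: "last (tl xs2) = last xs2" using tl2 by (cases xs2) auto
  have "\<exists>l \<in> wlengths G x z. l \<le> wdist G x y \<oplus>\<^sub>o wdist G y z"
  proof (cases "junc (last ws1) y (hd ws2)")
    case True
    have "is_walk1 G (xs1 @ tl xs2) (ws1 @ ws2)"
      using append_walk1[OF w1(1) w2(1)] w1(3) w2(2) True by simp
    moreover have "hd (xs1 @ tl xs2) = x" "last (xs1 @ tl xs2) = z" using xs1ne tl2 lt2 w1 w2 by simp_all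
    moreover have "len1 (ws1 @ ws2) = wdist G x y \<oplus>\<^sub>o wdist G y z"
      using len1_append[of ws1 ws2] w1(4) w2(4) by metis
    ultimately have "len1 (ws1 @ ws2) \<in> wlengths G x z" using wl_eq[OF xz x z] by blast
    then show ?thesis using \<open>len1 (ws1 @ ws2) = wdist G x y \<oplus>\<^sub>o wdist G y z\<close> by force
  next
    case False
    obtain a where ga: "good G a (last ws1) (last xs1)" using walk1_hd_last(2)[OF w1(1)] by blast
    obtain b where gb: "good G (hd xs2) (hd ws2) b" using walk1_hd_last(1)[OF w2(1)] by blast
    obtain v where v: "rend (last ws1) = Some v" "lend (hd ws2) = Some v"
      using no_junc[of "last ws1" y "hd ws2"] ga gb False w1 w2 by (auto simp: good_def)
    define M where "M = merge (last ws1) (hd ws2)"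
    have mw: "is_walk1 G (butlast xs1 @ tl xs2) (butlast ws1 @ M # tl ws2)"
      using merge_walk1[OF w1(1) w2(1) _ v] w1(3) w2(2) M_def by simp
    have "hd (butlast xs1) = hd xs1" using bxs1 xs1ne by (metis append_butlast_last_id hd_append2)
    then have hl: "hd (butlast xs1 @ tl xs2) = x" "last (butlast xs1 @ tl xs2) = z"
      using bxs1 tl2 lt2 w1 w2 xs1ne by simp_all
    have mle: "len0 M \<le> len0 (last ws1) \<oplus>\<^sub>o len0 (hd ws2)"
      using merge_props[of G "last ws1" "hd ws2" v] ga gb v M_def by (simp add: good_def)
    have e1: "len1 ws1 = len1 (butlast ws1) \<oplus>\<^sub>o (len0 (last ws1) \<oplus>\<^sub>o (0, 0))"
      using len1_append[of "butlast ws1" "[last ws1]"] l1 by simp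
    have e2: "len1 ws2 = len0 (hd ws2) \<oplus>\<^sub>o len1 (tl ws2)"
      using l2 by (metis len1_Cons list.collapse)
    have "len1 (butlast ws1 @ M # tl ws2) = len1 (butlast ws1) \<oplus>\<^sub>o (len0 M \<oplus>\<^sub>o len1 (tl ws2))"
      by (simp add: len1_append)
    also have "\<dots> \<le> len1 ws1 \<oplus>\<^sub>o len1 ws2"
      unfolding e1 e2 by (rule ineq_aux[OF mle])
    finally have "len1 (butlast ws1 @ M # tl ws2) \<le> wdist G x y \<oplus>\<^sub>o wdist G y z" using w1 w2 by simp
    moreover have "len1 (butlast ws1 @ M # tl ws2) \<in> wlengths G x z"
      using wl_eq[OF xz x z] mw hl by blast
    ultimately show ?thesis by blast
  qed
  then obtain l where "l \<in> wlengths G x z" "l \<le> wdist G x y \<oplus>\<^sub>o wdist G y z" by blast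
  then show ?thesis using wdist_least(2)[OF ne3 xz] order_trans by blast
qed

theorem lemma7p1:
  fixes G :: "'v graph1"
  assumes "is_1graph G" and "wconnected1 G"
    and "maximal G x" and "maximal G y" and "maximal G z"
  shows "(x \<noteq> y \<longrightarrow> wdist G x y \<in> wlengths G x y \<and> (\<forall>l\<in>wlengths G x y. wdist G x y \<le> l))
     \<and> (wdist G x y = (0, 0) \<longleftrightarrow> x = y)
     \<and> wdist G x y = wdist G y x
     \<and> wdist G x z \<le> wdist G x y \<oplus>\<^sub>o wdist G y z"
proof -
  have x: "x \<in> nodes G" and y: "y \<in> nodes G" and z: "z \<in> nodes G"
    using assms(3-5) by (auto simp: maximal_def)
  have P1: "x \<noteq> y \<longrightarrow> wdist G x y \<in> wlengths G x y \<and> (\<forall>l\<in>wlengths G x y. wdist G x y \<le> l)"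
  proof
    assume xy: "x \<noteq> y"
    have "wlengths G x y \<noteq> {}" using assms(2) x y xy by (auto simp: wconnected1_def)
    then show "wdist G x y \<in> wlengths G x y \<and> (\<forall>l\<in>wlengths G x y. wdist G x y \<le> l)"
      using wdist_least[OF _ xy] by blast
  qed
  have P2: "wdist G x y = (0, 0) \<longleftrightarrow> x = y"
  proof
    assume h: "wdist G x y = (0, 0)"
    show "x = y"
    proof (rule ccontr)
      assume xy: "x \<noteq> y"
      then have "wdist G x y \<in> wlengths G x y" using P1 by blast
      then obtain xs ws where "is_walk1 G xs ws" "len1 ws = wdist G x y"
        using wl_eq[OF xy x y] by auto
      then show False using len1_nz h by metis
    qed
  next
    assume "x = y"
    then show "wdist G x y = (0, 0)" by (simp add: wdist_def)
  qed
  have P4: "wdist G x z \<le> wdist G x y \<oplus>\<^sub>o wdist G y z"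
  proof (cases "x = z")
    case True
    then have "wdist G x z = (0, 0)" by (simp add: wdist_def)
    then show ?thesis by simp
  next
    case xz: False
    show ?thesis
    proof (cases "x = y")
      case True
      then show ?thesis by (simp add: wdist_def)
    next
      case xy: False
      show ?thesis
      proof (cases "y = z")
        case True
        then show ?thesis by (simp add: wdist_def)
      next
        case False
        then show ?thesis using triangle[OF assms(2) x y z xy False xz] by blast
      qed
    qed
  qed
  show ?thesis using P1 P2 P4 wdist_sym by blast
qed

end
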